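(* Consider the integer quadratic program: minimize $x^TQx$ subject to $Ax\le b$, $Cx=d$, $x\in\mathbb{Z}^n$. If this program has an optimal solution, then for any $x_0$ with $Cx_0=d$ there exists an optimal solution $x^\star$ such that at least one of the following holds: (1) there exist a row $a_j^T$ of $A$ and an integer $b_j'\in\{b_j-\alpha\cdot n\cdot\Delta^2,\ldots,b_j\}$ such that $a_j^Tx^\star=b_j'$ and $a_j^T$ is linearly independent from the rows of $C$; (2) there exists $y_i\in Y$ such that $y_i^TQ$ is linearly independent of the rows of $C$ and $2y_i^TQx^\star=z$ for some $z\in\{-n^2\Delta^4\alpha,\ldots,n^2\Delta^4\alpha\}$; (3) $|x^\star-x_0|_1\le\Delta^2\cdot n$.
   Context: Setting: $Q$ is an $n\times n$ integer symmetric matrix, $A$ an $m\times n$ integer matrix with rows $a_1^T,\dots,a_m^T$, $b\in\mathbb{Z}^m$ with entries $b_j$, $C$ an integer matrix with $n$ columns and linearly independent rows, and $d$ an integer vector. $\alpha$ is the maximum absolute value of an entry of $Q$ and $A$, and $\Delta$ is the maximum absolute value of the determinant of a square submatrix of $C$. $y_1,\dots,y_r$ is a basis of the nullspace of $C$ consisting of integer vectors with $|y_i|_\infty\le\Delta^2$, and $Y$ is the set of these vectors. A feasible solution is an $x\in\mathbb{Z}^n$ with $Ax\le b$ and $Cx=d$; an optimal solution is a feasible solution minimizing $x^TQx$. *)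

theory Defs
  imports Complex_Main "HOL-Combinatorics.Permutations"
begin

text \<open>Vectors in Z^n are functions nat => int (only indices < n matter);
  an m x n matrix is a function nat => nat => int (only entries i<m, j<n matter).\<close>

definition mv :: "nat \<Rightarrow> (nat \<Rightarrow> nat \<Rightarrow> int) \<Rightarrow> (nat \<Rightarrow> int) \<Rightarrow> nat \<Rightarrow> int" where
  "mv n M x i = (\<Sum>l<n. M i l * x l)"

definition quad :: "nat \<Rightarrow> (nat \<Rightarrow> nat \<Rightarrow> int) \<Rightarrow> (nat \<Rightarrow> int) \<Rightarrow> int" where
  "quad n Q x = (\<Sum>i<n. \<Sum>j<n. x i * Q i j * x j)"

definition det_sq :: "nat \<Rightarrow> (nat \<Rightarrow> nat \<Rightarrow> int) \<Rightarrow> int" where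
  "det_sq s M = (\<Sum>p | p permutes {..<s}. sign p * (\<Prod>i<s. M i (p i)))"

definition Delta :: "nat \<Rightarrow> nat \<Rightarrow> (nat \<Rightarrow> nat \<Rightarrow> int) \<Rightarrow> int" where
  "Delta k n C = Max {\<bar>det_sq s (\<lambda>i j. C (I i) (J j))\<bar> | s I J.
      strict_mono_on {..<s} I \<and> I ` {..<s} \<subseteq> {..<k} \<and>
      strict_mono_on {..<s} J \<and> J ` {..<s} \<subseteq> {..<n}}"

definition alpha :: "nat \<Rightarrow> nat \<Rightarrow> (nat \<Rightarrow> nat \<Rightarrow> int) \<Rightarrow> (nat \<Rightarrow> nat \<Rightarrow> int) \<Rightarrow> int" where
  "alpha m n Q A = Max (insert 0 ({\<bar>Q i j\<bar> | i j. i < n \<and> j < n} \<union> {\<bar>A i j\<bar> | i j. i < m \<and> j < n}))"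

definition lin_indep_rows :: "nat \<Rightarrow> nat \<Rightarrow> (nat \<Rightarrow> nat \<Rightarrow> int) \<Rightarrow> bool" where
  "lin_indep_rows k n C \<longleftrightarrow>
     (\<forall>c :: nat \<Rightarrow> real. (\<forall>l<n. (\<Sum>i<k. c i * of_int (C i l)) = 0) \<longrightarrow> (\<forall>i<k. c i = 0))"

definition in_row_span :: "nat \<Rightarrow> nat \<Rightarrow> (nat \<Rightarrow> nat \<Rightarrow> int) \<Rightarrow> (nat \<Rightarrow> real) \<Rightarrow> bool" where
  "in_row_span k n C v \<longleftrightarrow> (\<exists>c :: nat \<Rightarrow> real. \<forall>l<n. v l = (\<Sum>i<k. c i * of_int (C i l)))"

definition null_basis :: "nat \<Rightarrow> nat \<Rightarrow> (nat \<Rightarrow> nat \<Rightarrow> int) \<Rightarrow> nat \<Rightarrow> (nat \<Rightarrow> nat \<Rightarrow> int) \<Rightarrow> bool" where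
  "null_basis k n C r y \<longleftrightarrow>
     (\<forall>i<r. \<forall>j<k. (\<Sum>l<n. C j l * y i l) = 0) \<and>
     (\<forall>c :: nat \<Rightarrow> real. (\<forall>l<n. (\<Sum>i<r. c i * of_int (y i l)) = 0) \<longrightarrow> (\<forall>i<r. c i = 0)) \<and>
     (\<forall>v :: nat \<Rightarrow> real. (\<forall>j<k. (\<Sum>l<n. of_int (C j l) * v l) = 0) \<longrightarrow>
        (\<exists>c :: nat \<Rightarrow> real. \<forall>l<n. v l = (\<Sum>i<r. c i * of_int (y i l))))"

definition feasible :: "nat \<Rightarrow> nat \<Rightarrow> nat \<Rightarrow> (nat \<Rightarrow> nat \<Rightarrow> int) \<Rightarrow> (nat \<Rightarrow> int)
    \<Rightarrow> (nat \<Rightarrow> nat \<Rightarrow> int) \<Rightarrow> (nat \<Rightarrow> int) \<Rightarrow> (nat \<Rightarrow> int) \<Rightarrow> bool" where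
  "feasible m k n A b C d x \<longleftrightarrow> (\<forall>j<m. mv n A x j \<le> b j) \<and> (\<forall>j<k. mv n C x j = d j)"

definition optimal :: "nat \<Rightarrow> nat \<Rightarrow> nat \<Rightarrow> (nat \<Rightarrow> nat \<Rightarrow> int) \<Rightarrow> (nat \<Rightarrow> nat \<Rightarrow> int)
    \<Rightarrow> (nat \<Rightarrow> int) \<Rightarrow> (nat \<Rightarrow> nat \<Rightarrow> int) \<Rightarrow> (nat \<Rightarrow> int) \<Rightarrow> (nat \<Rightarrow> int) \<Rightarrow> bool" where
  "optimal m k n Q A b C d x \<longleftrightarrow> feasible m k n A b C d x \<and>
     (\<forall>x'. feasible m k n A b C d x' \<longrightarrow> quad n Q x \<le> quad n Q x')"

end

theory Submission
  imports Defs
begin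
definition bil :: "nat \<Rightarrow> (nat \<Rightarrow> nat \<Rightarrow> int) \<Rightarrow> (nat \<Rightarrow> int) \<Rightarrow> (nat \<Rightarrow> int) \<Rightarrow> int" where
  "bil n Q v w = (\<Sum>t<n. \<Sum>l<n. v t * Q t l * w l)"

lemma mv_lin: "mv n M (\<lambda>l. x l + c * s l) j = mv n M x j + c * mv n M s j"
  by (simp add: mv_def algebra_simps sum.distrib sum_distrib_left)

lemma mv_scale: "mv n M (\<lambda>l. c * s l) j = c * mv n M s j"
  by (simp add: mv_def algebra_simps sum_distrib_left)

lemma rowspan_zero:
  assumes "in_row_span k n C (\<lambda>l. of_int (f l))" "\<forall>j<k. mv n C v j = 0"
  shows "(\<Sum>l<n. f l * v l) = 0"
proof -
  obtain c where c: "\<forall>l<n. real_of_int (f l) = (\<Sum>i<k. c i * of_int (C i l))"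
    using assms(1) unfolding in_row_span_def by blast
  have "real_of_int (\<Sum>l<n. f l * v l) = (\<Sum>l<n. (\<Sum>i<k. c i * of_int (C i l)) * of_int (v l))"
    using c by (simp add: of_int_sum)
  also have "\<dots> = (\<Sum>i<k. c i * of_int (mv n C v i))"
    by (simp add: mv_def sum_distrib_left sum_distrib_right mult.assoc of_int_sum sum.swap[of _ "{..<k}"])
  also have "\<dots> = 0" using assms(2) by simp
  finally show ?thesis by (metis of_int_eq_0_iff)
qed

lemma kernel_zero:
  assumes "null_basis k n C r y" "\<forall>j<k. mv n C v j = 0" "\<forall>i<r. (\<Sum>l<n. f l * y i l) = 0"
  shows "(\<Sum>l<n. f l * v l) = 0"
proof -
  have "\<forall>j<k. (\<Sum>l<n. real_of_int (C j l) * real_of_int (v l)) = 0"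
  proof (intro allI impI)
    fix j assume "j < k"
    then have "mv n C v j = 0" using assms(2) by simp
    then have "real_of_int (mv n C v j) = 0" by simp
    then show "(\<Sum>l<n. real_of_int (C j l) * real_of_int (v l)) = 0"
      by (simp add: mv_def of_int_sum)
  qed
  moreover have H: "\<forall>v :: nat \<Rightarrow> real. (\<forall>j<k. (\<Sum>l<n. of_int (C j l) * v l) = 0) \<longrightarrow>
        (\<exists>c :: nat \<Rightarrow> real. \<forall>l<n. v l = (\<Sum>i<r. c i * of_int (y i l)))"
    using assms(1) unfolding null_basis_def by blast
  ultimately obtain c where c: "\<forall>l<n. real_of_int (v l) = (\<Sum>i<r. c i * of_int (y i l))"
    using H[rule_format, of "\<lambda>l. real_of_int (v l)"] by blast
  have "real_of_int (\<Sum>l<n. f l * v l) = (\<Sum>l<n. of_int (f l) * (\<Sum>i<r. c i * of_int (y i l)))"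
    using c by (simp add: of_int_sum)
  also have "\<dots> = (\<Sum>i<r. c i * of_int (\<Sum>l<n. f l * y i l))"
    by (simp add: sum_distrib_left sum_distrib_right mult.assoc mult.left_commute of_int_sum sum.swap[of _ "{..<r}"])
  also have "\<dots> = 0" using assms(3) by simp
  finally show ?thesis by (metis of_int_eq_0_iff)
qed

lemma bil_sym:
  assumes "\<forall>i<n. \<forall>j<n. Q i j = Q j i"
  shows "bil n Q v w = bil n Q w v"
proof -
  have "bil n Q v w = (\<Sum>l<n. \<Sum>t<n. v t * Q t l * w l)"
    unfolding bil_def by (rule sum.swap)
  also have "\<dots> = bil n Q w v"
    unfolding bil_def using assms by (intro sum.cong refl) (simp add: algebra_simps)
  finally show ?thesis .
qed

lemma quad_add:
  assumes "\<forall>i<n. \<forall>j<n. Q i j = Q j i"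
  shows "quad n Q (\<lambda>l. x l + v l) = quad n Q x + 2 * bil n Q x v + quad n Q v"
proof -
  have "quad n Q (\<lambda>l. x l + v l) = quad n Q x + bil n Q x v + bil n Q v x + quad n Q v"
    unfolding quad_def bil_def by (simp add: algebra_simps sum.distrib)
  then show ?thesis using bil_sym[OF assms, of v x] by simp
qed

lemma bil_left: "bil n Q v w = (\<Sum>l<n. (\<Sum>t<n. v t * Q t l) * w l)"
  unfolding bil_def by (subst sum.swap) (simp add: sum_distrib_right)

lemma bil_right: "bil n Q v w = (\<Sum>t<n. (\<Sum>l<n. Q t l * w l) * v t)"
  unfolding bil_def by (simp add: sum_distrib_left sum_distrib_right algebra_simps)

lemma alpha_Q: "i < n \<Longrightarrow> j < n \<Longrightarrow> \<bar>Q i j\<bar> \<le> alpha m n Q A"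
  unfolding alpha_def
  by (rule Max_ge) (auto intro: finite_image_set2)

lemma alpha_A: "i < m \<Longrightarrow> j < n \<Longrightarrow> \<bar>A i j\<bar> \<le> alpha m n Q A"
  unfolding alpha_def
  by (rule Max_ge) (auto intro: finite_image_set2)

lemma alpha_nonneg: "0 \<le> alpha m n Q A"
  unfolding alpha_def
  by (rule Max_ge) (auto intro: finite_image_set2)

lemma Ay_bd:
  assumes "j < m" "\<forall>l<n. \<bar>v l\<bar> \<le> D2"
  shows "\<bar>mv n A v j\<bar> \<le> alpha m n Q A * int n * D2"
proof -
  have "\<bar>mv n A v j\<bar> \<le> (\<Sum>l<n. \<bar>A j l * v l\<bar>)" unfolding mv_def by (rule sum_abs)
  also have "\<dots> \<le> (\<Sum>l<n. alpha m n Q A * D2)"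
    by (rule sum_mono) (use assms alpha_A alpha_nonneg in \<open>auto simp: abs_mult intro!: mult_mono\<close>)
  finally show ?thesis by (simp add: algebra_simps)
qed

lemma quad_bd:
  assumes "\<forall>l<n. \<bar>v l\<bar> \<le> D2"
  shows "\<bar>quad n Q v\<bar> \<le> int n ^ 2 * D2 ^ 2 * alpha m n Q A"
proof -
  have "\<bar>quad n Q v\<bar> \<le> (\<Sum>i<n. \<bar>\<Sum>j<n. v i * Q i j * v j\<bar>)" unfolding quad_def by (rule sum_abs)
  also have "\<dots> \<le> (\<Sum>i<n. \<Sum>j<n. \<bar>v i * Q i j * v j\<bar>)" by (intro sum_mono sum_abs)
  also have "\<dots> \<le> (\<Sum>i<n. \<Sum>j<n. D2 * alpha m n Q A * D2)"
  proof (intro sum_mono)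
    fix i j assume "i \<in> {..<n}" "j \<in> {..<n}"
    then have "\<bar>v i\<bar> \<le> D2" "\<bar>v j\<bar> \<le> D2" "\<bar>Q i j\<bar> \<le> alpha m n Q A" using assms alpha_Q by auto
    moreover have "0 \<le> alpha m n Q A" by (rule alpha_nonneg)
    ultimately show "\<bar>v i * Q i j * v j\<bar> \<le> D2 * alpha m n Q A * D2"
      by (auto simp: abs_mult intro!: mult_mono)
  qed
  finally show ?thesis by (simp add: algebra_simps power2_eq_square)
qed

lemma mv_diff: "mv n M (\<lambda>l. x l - z l) j = mv n M x j - mv n M z j"
  by (simp add: mv_def algebra_simps sum_subtractf)

lemma quad_scale: "quad n Q (\<lambda>l. e * v l) = e^2 * quad n Q v"
  by (simp add: quad_def sum_distrib_left algebra_simps power2_eq_square)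

lemma bil_scale: "bil n Q x (\<lambda>l. e * v l) = e * bil n Q x v"
  by (simp add: bil_def sum_distrib_left algebra_simps)

lemma quad_bil: "quad n Q v = bil n Q v v"
  by (simp add: quad_def bil_def)

theorem lemma5:
  fixes m k n r :: nat
    and Q A C y :: "nat \<Rightarrow> nat \<Rightarrow> int"
    and b d x0 :: "nat \<Rightarrow> int"
  assumes Q_sym: "\<forall>i<n. \<forall>j<n. Q i j = Q j i"
    and C_indep: "lin_indep_rows k n C"
    and Y_basis: "null_basis k n C r y"
    and Y_bound: "\<forall>i<r. \<forall>l<n. \<bar>y i l\<bar> \<le> (Delta k n C)\<^sup>2"
    and has_opt: "\<exists>x. optimal m k n Q A b C d x"
    and x0: "\<forall>j<k. mv n C x0 j = d j"
  shows "\<exists>xs. optimal m k n Q A b C d xs \<and>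
    ((\<exists>j<m. \<exists>b'. b j - alpha m n Q A * int n * (Delta k n C)\<^sup>2 \<le> b' \<and> b' \<le> b j \<and>
              mv n A xs j = b' \<and> \<not> in_row_span k n C (\<lambda>l. of_int (A j l))) \<or>
     (\<exists>i<r. \<not> in_row_span k n C (\<lambda>l. of_int (\<Sum>t<n. y i t * Q t l)) \<and>
              (\<exists>z. - (int n ^ 2 * (Delta k n C) ^ 4 * alpha m n Q A) \<le> z \<and>
                   z \<le> int n ^ 2 * (Delta k n C) ^ 4 * alpha m n Q A \<and>
                   2 * (\<Sum>t<n. \<Sum>l<n. y i t * Q t l * xs l) = z)) \<or>
     (\<Sum>l<n. \<bar>xs l - x0 l\<bar>) \<le> (Delta k n C)\<^sup>2 * int n)"
proof -
  define D where "D = Delta k n C"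
  define al where "al = alpha m n Q A"
  have al0: "0 \<le> al" unfolding al_def by (rule alpha_nonneg)
  obtain x1 where opt1: "optimal m k n Q A b C d x1" using has_opt by blast
  have feas1: "feasible m k n A b C d x1"
    and min1: "\<And>x'. feasible m k n A b C d x' \<Longrightarrow> quad n Q x1 \<le> quad n Q x'"
    using opt1 unfolding optimal_def by auto
  have Cy: "\<forall>i<r. \<forall>j<k. mv n C (y i) j = 0"
    using Y_basis unfolding null_basis_def mv_def by blast
  have Ayb: "\<bar>mv n A (y i) j\<bar> \<le> al * int n * D^2" if "i < r" "j < m" for i j
    unfolding al_def D_def using Ay_bd[of j m n "y i" "(Delta k n C)\<^sup>2" A Q] Y_bound that by blast
  have qyb: "\<bar>quad n Q (y i)\<bar> \<le> int n ^ 2 * D ^ 4 * al" if "i < r" for i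
  proof -
    have "\<bar>quad n Q (y i)\<bar> \<le> int n ^ 2 * ((Delta k n C)\<^sup>2) ^ 2 * alpha m n Q A"
      using quad_bd[of n "y i" "(Delta k n C)\<^sup>2" Q m A] Y_bound that by blast
    then show ?thesis unfolding D_def al_def by (simp add: power_mult[symmetric])
  qed
  have Arow: "mv n A v j = 0" if "in_row_span k n C (\<lambda>l. of_int (A j l))" "\<forall>j'<k. mv n C v j' = 0" for j v
    using rowspan_zero[OF that] unfolding mv_def .
  let ?c1 = "\<lambda>xs. \<exists>j<m. \<exists>b'. b j - al * int n * D\<^sup>2 \<le> b' \<and> b' \<le> b j \<and>
              mv n A xs j = b' \<and> \<not> in_row_span k n C (\<lambda>l. of_int (A j l))"
  let ?c2 = "\<lambda>xs. \<exists>i<r. \<not> in_row_span k n C (\<lambda>l. of_int (\<Sum>t<n. y i t * Q t l)) \<and>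
              (\<exists>z. - (int n ^ 2 * D ^ 4 * al) \<le> z \<and>
                   z \<le> int n ^ 2 * D ^ 4 * al \<and>
                   2 * (\<Sum>t<n. \<Sum>l<n. y i t * Q t l * xs l) = z)"
  let ?c3 = "\<lambda>xs. (\<Sum>l<n. \<bar>xs l - x0 l\<bar>) \<le> D\<^sup>2 * int n"
  have main: "\<exists>xs. optimal m k n Q A b C d xs \<and> (?c1 xs \<or> ?c2 xs \<or> ?c3 xs)"
  proof (cases "?c1 x1 \<or> ?c2 x1")
    case True
    then show ?thesis using opt1 by blast
  next
    case False
    have slack: "mv n A x1 j < b j - al * int n * D^2"
      if "j < m" "\<not> in_row_span k n C (\<lambda>l. of_int (A j l))" for j
    proof (rule ccontr)
      assume "\<not> ?thesis"
      moreover have "mv n A x1 j \<le> b j" using feas1 that unfolding feasible_def by blast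
      ultimately have "?c1 x1" using that by force
      then show False using False by blast
    qed
    have pm: "feasible m k n A b C d (\<lambda>l. x1 l + e * y i l)" if "i < r" "\<bar>e\<bar> = 1" for i e
      unfolding feasible_def
    proof (intro conjI allI impI)
      fix j assume j: "j < m"
      have eq: "mv n A (\<lambda>l. x1 l + e * y i l) j = mv n A x1 j + e * mv n A (y i) j" by (rule mv_lin)
      show "mv n A (\<lambda>l. x1 l + e * y i l) j \<le> b j"
      proof (cases "in_row_span k n C (\<lambda>l. of_int (A j l))")
        case True
        then have "mv n A (y i) j = 0" using Arow Cy that(1) by blast
        then show ?thesis using eq feas1 j unfolding feasible_def by simp
      next
        case False
        have "e * mv n A (y i) j \<le> \<bar>e * mv n A (y i) j\<bar>" by simp
        also have "\<dots> = \<bar>mv n A (y i) j\<bar>" using that(2) by (simp add: abs_mult)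
        also have "\<dots> \<le> al * int n * D^2" using Ayb that(1) j by blast
        finally show ?thesis using eq slack[OF j False] by linarith
      qed
    next
      fix j assume j: "j < k"
      show "mv n C (\<lambda>l. x1 l + e * y i l) j = d j"
        using mv_lin[of n C x1 e "y i" j] Cy that(1) j feas1 unfolding feasible_def by simp
    qed
    have quad_pm: "quad n Q x1 \<le> quad n Q x1 + 2 * e * bil n Q x1 (y i) + quad n Q (y i)"
      if "i < r" "\<bar>e\<bar> = 1" for i e
    proof -
      have "e^2 = 1" using that(2) by (metis abs_power2 power2_eq_1_iff power2_abs)
      then have "quad n Q (\<lambda>l. x1 l + e * y i l) = quad n Q x1 + 2 * e * bil n Q x1 (y i) + quad n Q (y i)"
        using quad_add[OF Q_sym, of x1 "\<lambda>l. e * y i l"] quad_scale[of n Q e "y i"] bil_scale[of n Q x1 e "y i"]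
        by simp
      then show ?thesis using min1[OF pm[OF that]] by simp
    qed
    have bnd: "\<bar>2 * bil n Q (y i) x1\<bar> \<le> quad n Q (y i)" if "i < r" for i
      using quad_pm[OF that, of 1] quad_pm[OF that, of "-1"] bil_sym[OF Q_sym, of "y i" x1] by simp
    have span: "in_row_span k n C (\<lambda>l. of_int (\<Sum>t<n. y i t * Q t l))" if "i < r" for i
    proof (rule ccontr)
      assume ns: "\<not> ?thesis"
      have "\<bar>2 * bil n Q (y i) x1\<bar> \<le> int n ^ 2 * D ^ 4 * al" using bnd[OF that] qyb[OF that] by linarith
      then have "?c2 x1" using ns that unfolding bil_def by (intro exI[of _ i]) auto
      then show False using False by blast
    qed
    have yQzero: "bil n Q (y i) v = 0" if "i < r" "\<forall>j<k. mv n C v j = 0" for i v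
      unfolding bil_left using rowspan_zero[OF span[OF that(1)] that(2)] .
    have qy0: "quad n Q (y i) = 0" if "i < r" for i
      using yQzero[OF that] Cy that unfolding quad_bil by blast
    have b0: "bil n Q (y i) x1 = 0" if "i < r" for i
      using bnd[OF that] qy0[OF that] by simp
    have allopt: "optimal m k n Q A b C d x" if fx: "feasible m k n A b C d x" for x
    proof -
      define v where "v = (\<lambda>l. x l - x1 l)"
      have Cv: "\<forall>j<k. mv n C v j = 0"
        using fx feas1 unfolding feasible_def v_def mv_diff by simp
      have "bil n Q v x1 = 0"
        unfolding bil_right
        by (rule kernel_zero[OF Y_basis Cv]) (use b0 in \<open>simp add: bil_right\<close>)
      moreover have "bil n Q v v = 0"
        unfolding bil_right
        by (rule kernel_zero[OF Y_basis Cv]) (use yQzero Cv in \<open>simp add: bil_right\<close>)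
      moreover have "x = (\<lambda>l. x1 l + v l)" unfolding v_def by auto
      ultimately have "quad n Q x = quad n Q x1"
        using quad_add[OF Q_sym, of x1 v] bil_sym[OF Q_sym, of x1 v] quad_bil[of n Q v] by simp
      then show ?thesis using fx min1 unfolding optimal_def by simp
    qed
    show ?thesis
    proof (cases "feasible m k n A b C d x0")
      case True
      have "?c3 x0" by (simp add: D_def)
      then show ?thesis using allopt[OF True] by blast
    next
      case False
      then obtain j where j: "j < m" "mv n A x0 j > b j" using x0 unfolding feasible_def by force
      have "\<exists>i<r. mv n A (y i) j \<noteq> 0"
      proof (rule ccontr)
        assume "\<not> ?thesis"
        then have "\<forall>i<r. (\<Sum>l<n. A j l * y i l) = 0" unfolding mv_def by auto
        moreover have "\<forall>j<k. mv n C (\<lambda>l. x0 l - x1 l) j = 0"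
          using x0 feas1 unfolding feasible_def mv_diff by simp
        ultimately have "(\<Sum>l<n. A j l * (x0 l - x1 l)) = 0" using kernel_zero[OF Y_basis] by blast
        then have "mv n A (\<lambda>l. x0 l - x1 l) j = 0" unfolding mv_def .
        then show False using j feas1 unfolding mv_diff feasible_def by force
      qed
      then obtain i where i: "i < r" "mv n A (y i) j \<noteq> 0" by blast
      define e where "e = sgn (mv n A (y i) j)"
      have e1: "\<bar>e\<bar> = 1" using i(2) unfolding e_def by (simp add: abs_sgn)
      have "e * mv n A (y i) j = \<bar>mv n A (y i) j\<bar>" unfolding e_def by (simp add: abs_sgn mult.commute)
      moreover have "\<bar>mv n A (y i) j\<bar> \<ge> 1" using i(2) by arith
      ultimately have eA: "e * mv n A (y i) j \<ge> 1" by simp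
      define P where "P t = (\<lambda>l. x1 l + int t * (e * y i l))" for t :: nat
      have PC: "\<forall>j<k. mv n C (P t) j = d j" for t
        using mv_lin[of n C x1 "int t" "\<lambda>l. e * y i l"] mv_scale[of n C e "y i"] Cy i(1) feas1
        unfolding P_def feasible_def by simp
      have PA: "mv n A (P t) j' = mv n A x1 j' + int t * (e * mv n A (y i) j')" for t j'
        using mv_lin[of n A x1 "int t" "\<lambda>l. e * y i l"] mv_scale[of n A e "y i"] unfolding P_def by simp
      have ex: "\<exists>t. \<not> feasible m k n A b C d (P t)"
      proof
        let ?t = "nat (b j - mv n A x1 j) + 1"
        have "int ?t * (e * mv n A (y i) j) \<ge> int ?t" using eA by simp
        then have "mv n A (P ?t) j > b j" using PA[of ?t j] by linarith
        then show "\<not> feasible m k n A b C d (P ?t)" using j(1) unfolding feasible_def by force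
      qed
      define T where "T = (LEAST t. \<not> feasible m k n A b C d (P t))"
      have nT: "\<not> feasible m k n A b C d (P T)" unfolding T_def using LeastI_ex[OF ex] .
      have P0: "P 0 = x1" unfolding P_def by auto
      have T0: "T \<noteq> 0"
      proof
        assume "T = 0"
        then show False using nT feas1 P0 by simp
      qed
      have fT: "feasible m k n A b C d (P (T - 1))"
        using not_less_Least[of "T - 1" "\<lambda>t. \<not> feasible m k n A b C d (P t)"] T0 unfolding T_def by force
      obtain j' where j': "j' < m" "mv n A (P T) j' > b j'"
        using nT PC unfolding feasible_def by force
      have stp: "mv n A (P T) j' = mv n A (P (T - 1)) j' + e * mv n A (y i) j'"
        using PA[of T j'] PA[of "T - 1" j'] T0 by (simp add: of_nat_diff algebra_simps)
      have fj: "mv n A (P (T - 1)) j' \<le> b j'" using fT j'(1) unfolding feasible_def by blast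
      have ns: "\<not> in_row_span k n C (\<lambda>l. of_int (A j' l))"
      proof
        assume "in_row_span k n C (\<lambda>l. of_int (A j' l))"
        then have "mv n A (y i) j' = 0" using Arow Cy i(1) by blast
        then show False using stp fj j'(2) by simp
      qed
      have "e * mv n A (y i) j' \<le> \<bar>e * mv n A (y i) j'\<bar>" by simp
      also have "\<dots> = \<bar>mv n A (y i) j'\<bar>" using e1 by (simp add: abs_mult)
      also have "\<dots> \<le> al * int n * D^2" using Ayb i(1) j'(1) by blast
      finally have "?c1 (P (T - 1))" using stp fj j' ns by (intro exI[of _ j']) auto
      then show ?thesis using allopt[OF fT] by blast
    qed
  qed
  then show ?thesis unfolding D_def al_def .
qed

end
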